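(* Let $(Z_i)_{i\in\mathbb N}$ be independent with $Z_i\sim N(\mu r_i,1)$, where $\mu>0$ and $r_i\in\{0,1\}$ are fixed, let $c$ be a fixed threshold, and let $M_k=\{i\le k:\ |Z_i|>c\}$. Then for every $\beta\in(0,1)$, $$\mathbb P\Big(\forall k\in\mathbb N:\ \sum_{i\in M_k}r_i-\mathbb E\Big(\sum_{i\in M_k}r_i\Big)\ge-\frac{C_k^\beta}{2}\big(N_1(k)\big)^{1/2}\Big)\ge1-\beta,$$ where $\mathbb E(\sum_{i\in M_k}r_i)=\mathbb P(|Z(\mu)|>c)\,N_1(k)$.
   Context: $Z(\nu)$ denotes a $N(\nu,1)$ random variable. For $\gamma\in(0,1)$, $k\ge1$: $C_k^\gamma=1.7\sqrt{\log\log(2k)+0.72\log\frac{5.2}{\gamma}}$. $N_1(k)=\sum_{i=1}^kr_i$. *)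

theory Defs
  imports "HOL-Probability.Probability"
begin

definition C_const :: "nat \<Rightarrow> real \<Rightarrow> real" where
  "C_const k \<gamma> = 1.7 * sqrt (ln (ln (2 * real k)) + 0.72 * ln (5.2 / \<gamma>))"

definition N1 :: "(nat \<Rightarrow> real) \<Rightarrow> nat \<Rightarrow> real" where
  "N1 r k = (\<Sum>i=1..k. r i)"

definition normal_measure :: "real \<Rightarrow> real measure" where
  "normal_measure \<nu> = density lborel (normal_density \<nu> 1)"

definition tail_prob :: "real \<Rightarrow> real \<Rightarrow> real" where
  "tail_prob \<nu> c = measure (normal_measure \<nu>) {x. \<bar>x\<bar> > c}"

end

theory Submission
  imports Defs
begin

lemma pw14:
  fixes x q :: real
  assumes "x > 0" "q > 0" "1 \<le> q^5 * x^7"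
  shows "x powr (-1.4) \<le> q"
proof -
  define y where "y = x powr 1.4"
  have y: "y > 0" using assms by (simp add: y_def)
  have "y^5 = x powr (real 5 * 1.4)" unfolding y_def using assms(1)
    by (intro powr_power) simp
  also have "real 5 * 1.4 = (7::real)" by simp
  also have "x powr 7 = x^7" using assms(1) by (intro powr_numeral) simp
  finally have y5: "y^5 = x^7" .
  have "1 \<le> (q*y)^5" using assms(3) y5 by (simp add: power_mult_distrib)
  hence "1 \<le> q*y"
    using power_less_one_iff[of "q*y" 5] mult_pos_pos[OF assms(2) y] by force
  have "x powr (-1.4) = 1 / y" unfolding y_def using assms(1) by (simp add: powr_minus_divide)
  also have "\<dots> \<le> q" using \<open>1 \<le> q*y\<close> y by (simp add: divide_simps mult.commute)
  finally show ?thesis .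
qed

lemma pw04:
  fixes x q :: real
  assumes "x > 0" "q > 0" "1 \<le> q^5 * x^2"
  shows "x powr (-0.4) \<le> q"
proof -
  define y where "y = x powr 0.4"
  have y: "y > 0" using assms by (simp add: y_def)
  have "y^5 = x powr (real 5 * 0.4)" unfolding y_def using assms(1)
    by (intro powr_power) simp
  also have "real 5 * 0.4 = (2::real)" by simp
  also have "x powr 2 = x^2" using assms(1) by (intro powr_numeral) simp
  finally have y5: "y^5 = x^2" .
  have "1 \<le> (q*y)^5" using assms(3) y5 by (simp add: power_mult_distrib)
  hence "1 \<le> q*y"
    using power_less_one_iff[of "q*y" 5] mult_pos_pos[OF assms(2) y] by force
  have "x powr (-0.4) = 1 / y" unfolding y_def using assms(1) by (simp add: powr_minus_divide)
  also have "\<dots> \<le> q" using \<open>1 \<le> q*y\<close> y by (simp add: divide_simps mult.commute)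
  finally show ?thesis .
qed

lemma tailstep:
  fixes x :: real
  assumes "x \<ge> 2"
  shows "x powr (-1.4) \<le> 2.5 * ((x-1) powr (-0.4) - x powr (-0.4))"
proof -
  have "((\<lambda>z. z powr (-0.4)) has_real_derivative (-0.4) * t powr (-0.4 - 1)) (at t)"
    if "x - 1 \<le> t" "t \<le> x" for t
  proof -
    from that show "((\<lambda>z. z powr (-0.4)) has_real_derivative (-0.4) * t powr (-0.4 - 1)) (at t)"
      using assms by (intro has_real_derivative_powr) linarith
  qed
  from MVT2[of "x-1" x, OF _ this] obtain z where z: "z > x - 1" "z < x"
    "x powr (-0.4) - (x-1) powr (-0.4) = (x - (x-1)) * ((-0.4) * z powr (-0.4 - 1))" by auto
  have "x powr (-1.4) \<le> z powr (-1.4)" using z assms by (intro powr_mono2') auto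
  thus ?thesis using z(3) by simp
qed

lemma tailsum:
  "n \<ge> 8 \<Longrightarrow> (\<Sum>j\<in>{8..<n}. (real j + 1) powr (-1.4)) \<le> 2.5 * (8 powr (-0.4) - real n powr (-0.4))"
proof (induction n rule: dec_induct)
  case base then show ?case by simp
next
  case (step n)
  have "(\<Sum>j\<in>{8..<Suc n}. (real j + 1) powr (-1.4)) = (\<Sum>j\<in>{8..<n}. (real j + 1) powr (-1.4)) + (real n + 1) powr (-1.4)"
    using step by simp
  also have "\<dots> \<le> 2.5 * (8 powr (-0.4) - real n powr (-0.4)) + 2.5 * ((real n + 1 - 1) powr (-0.4) - (real n + 1) powr (-0.4))"
    using step tailstep[of "real n + 1"] by (intro add_mono) auto
  finally show ?case by (simp add: algebra_simps)
qed

lemma zsum: "(\<Sum>j<n. (real j + 1) powr (-1.4)) \<le> 3.14"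
proof -
  have s1: "(\<Sum>j<n. (real j + 1) powr (-1.4)) \<le> (\<Sum>j<max n 8. (real j + 1) powr (-1.4))"
    by (intro sum_mono2) auto
  have s2: "(\<Sum>j<max n 8. (real j + 1) powr (-1.4)) = (\<Sum>j<8. (real j + 1) powr (-1.4)) + (\<Sum>j\<in>{8..<max n 8}. (real j + 1) powr (-1.4))"
    using sum.atLeastLessThan_concat[of 0 8 "max n 8" "\<lambda>j. (real j + 1) powr (-1.4)"]
    by (simp add: lessThan_atLeast0)
  have s3: "(\<Sum>j\<in>{8..<max n 8}. (real j + 1) powr (-1.4)) \<le> 2.5 * (8 powr (-0.4) - real (max n 8) powr (-0.4))"
    by (rule tailsum) auto
  have s4: "(8::real) powr (-0.4) \<le> 0.4353" by (rule pw04) (simp_all add: power_divide)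
  have s5: "0 \<le> real (max n 8) powr (-0.4)" by simp
  have s6: "(\<Sum>j<8. (real j + 1) powr (-1.4)) \<le> 1 + 0.37893 + 0.2148 + 0.14359 + 0.10507 + 0.0814 + 0.0656 + 0.05441"
  proof -
    have a: "(2::real) powr (-1.4) \<le> 0.37893" by (rule pw14) (simp_all add: power_divide)
    have b: "(3::real) powr (-1.4) \<le> 0.2148" by (rule pw14) (simp_all add: power_divide)
    have c: "(4::real) powr (-1.4) \<le> 0.14359" by (rule pw14) (simp_all add: power_divide)
    have d: "(5::real) powr (-1.4) \<le> 0.10507" by (rule pw14) (simp_all add: power_divide)
    have e: "(6::real) powr (-1.4) \<le> 0.0814" by (rule pw14) (simp_all add: power_divide)
    have f: "(7::real) powr (-1.4) \<le> 0.0656" by (rule pw14) (simp_all add: power_divide)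
    have g: "(8::real) powr (-1.4) \<le> 0.05441" by (rule pw14) (simp_all add: power_divide)
    have "(\<Sum>j<8. (real j + 1) powr (-1.4)) = 1 + 2 powr (-1.4) + 3 powr (-1.4) + 4 powr (-1.4) + 5 powr (-1.4) + 6 powr (-1.4) + 7 powr (-1.4) + 8 powr (-1.4)"
      by (simp add: lessThan_nat_numeral eval_nat_numeral)
    then show ?thesis using a b c d e f g by linarith
  qed
  note ss = s1 s2 s3 s4 s5 s6
  have s7: "real (max n 8) powr (-(2/5)) \<ge> 0" by simp
  have "(\<Sum>j<n. (real j + 1) powr (-(7/5))) * 50 \<le> 157" using ss[simplified] s7 by linarith
  then show ?thesis by simp
qed

lemma explow: "0 \<le> (x::real) \<Longrightarrow> (\<Sum>m<n. x^m / fact m) \<le> exp x"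
proof -
  assume x: "0 \<le> x"
  obtain t where "exp x = (\<Sum>m<n. (x ^ m) / fact m) + (exp t / fact n) * x ^ n"
    using Maclaurin_exp_le[of x n] by blast
  moreover have "(exp t / fact n) * x ^ n \<ge> 0" using x by simp
  ultimately show ?thesis by linarith
qed

lemma expneg: "even n \<Longrightarrow> (\<Sum>m<n. (-(x::real))^m / fact m) \<le> exp (-x)"
proof -
  assume n: "even n"
  obtain t where "exp (-x) = (\<Sum>m<n. ((-x) ^ m) / fact m) + (exp t / fact n) * (-x) ^ n"
    using Maclaurin_exp_le[of "-x" n] by blast
  moreover have "(exp t / fact n) * (-x) ^ n \<ge> 0" using n by (simp add: zero_le_even_power)
  ultimately show ?thesis by linarith
qed

lemma ln2_ge: "ln (2::real) \<ge> 0.6931"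
proof -
  have "(0.5::real) \<le> (\<Sum>m<10. (-(0.6931::real))^m / fact m)"
    by (simp add: lessThan_nat_numeral fact_numeral power_divide)
  also have "\<dots> \<le> exp (-0.6931)" by (rule expneg) simp
  finally have "exp (0.6931::real) \<le> 2" by (simp add: exp_minus field_simps)
  thus ?thesis by (metis exp_gt_zero exp_le_cancel_iff exp_ln zero_less_numeral)
qed

lemma lnln2_ge: "ln (ln (2::real)) \<ge> -0.3667"
proof -
  have "1 / 0.6931 \<le> (\<Sum>m<6. (0.3667::real)^m / fact m)"
    by (simp add: lessThan_nat_numeral fact_numeral power_divide)
  also have "\<dots> \<le> exp 0.3667" by (rule explow) simp
  finally have "exp (-0.3667::real) \<le> 0.6931" by (simp add: exp_minus field_simps)
  also have "\<dots> \<le> ln 2" by (rule ln2_ge)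
  finally show ?thesis
    by (metis exp_gt_zero exp_le_cancel_iff exp_ln order_less_le_trans)
qed

lemma ln52_ge: "ln (5.2::real) \<ge> 1.6486"
proof -
  have "1/5.2 \<le> (\<Sum>m<12. (-(1.6486::real))^m / fact m)"
    by (simp add: lessThan_nat_numeral fact_numeral power_divide)
  also have "\<dots> \<le> exp (-1.6486)" by (rule expneg) simp
  finally have "exp (1.6486::real) \<le> 5.2" by (simp add: exp_minus field_simps)
  thus ?thesis by (metis exp_gt_zero exp_le_cancel_iff exp_ln order_less_le_trans)
qed

lemma lnc0_le: "- ln (0.318::real) \<le> 1.1458"
proof -
  have "1/0.318 \<le> (\<Sum>m<10. (1.1458::real)^m / fact m)"
    by (simp add: lessThan_nat_numeral fact_numeral power_divide)
  also have "\<dots> \<le> exp 1.1458" by (rule explow) simp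
  finally have "exp (-1.1458::real) \<le> 0.318" by (simp add: exp_minus field_simps)
  hence "-1.1458 \<le> ln (0.318::real)"
    by (metis exp_gt_zero exp_le_cancel_iff exp_ln order_less_le_trans)
  thus ?thesis by simp
qed

lemma sqrt2_ge: "sqrt (2::real) \<ge> 1.41421"
  by (rule real_le_rsqrt) (simp add: power2_eq_square)

lemma p10: "(10::real)^2 = 100" "(10::real)^3 = 1000" "(10::real)^4 = 10000" "(10::real)^5 = 100000"
  by simp_all

lemma constD:
  fixes j k :: nat and \<beta> :: real
  assumes jk: "2^j \<le> k" and b: "0 < \<beta>" "\<beta> < 1"
  defines "L \<equiv> - ln (\<beta> * 0.318 / (real j + 1) powr 1.4)"
  defines "S \<equiv> ln (ln (2 * real k)) + 0.72 * ln (5.2 / \<beta>)"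
  shows "S \<ge> 0" "(2 * sqrt 2 + 3) * L \<le> 2 * sqrt 2 * (289/100 * S)" "L > 0"
proof -
  define A where "A = - ln \<beta>"
  define l where "l = ln (real j + 1)"
  have A: "A > 0" using b by (simp add: A_def)
  have l: "l \<ge> 0" by (simp add: l_def)
  have pp: "(real j+1) powr 1.4 > 0" by simp
  have "ln (\<beta> * 0.318 / (real j+1) powr 1.4) = ln (\<beta> * 0.318) - ln ((real j+1) powr 1.4)"
    by (rule ln_divide_pos) (use b pp in auto)
  also have "ln (\<beta> * 0.318) = ln \<beta> + ln 0.318" using b by (simp only: ln_mult) simp
  also have "ln ((real j+1) powr 1.4) = 1.4 * ln (real j+1)" by (rule ln_powr)
  finally have L: "L = A - ln 0.318 + 1.4 * l" unfolding L_def A_def l_def by simp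
  have "(2::real)^(j+1) \<le> 2 * real k" using jk
    by (metis mult_le_mono2 of_nat_le_iff of_nat_mult of_nat_numeral of_nat_power power_Suc Suc_eq_plus1)
  hence "ln ((2::real)^(j+1)) \<le> ln (2 * real k)" by (intro ln_mono) auto
  moreover have "ln ((2::real)^(j+1)) = real (j+1) * ln 2" by (rule ln_realpow)
  ultimately have "(real j + 1) * ln 2 \<le> ln (2 * real k)" by (simp add: algebra_simps)
  moreover have "(real j + 1) * ln 2 > 0" by simp
  ultimately have "ln ((real j + 1) * ln 2) \<le> ln (ln (2 * real k))" by (intro ln_mono) auto
  hence ll: "l + ln (ln 2) \<le> ln (ln (2 * real k))" by (simp add: ln_mult l_def)
  have S5: "ln (5.2 / \<beta>) = ln 5.2 + A" unfolding A_def using ln_divide_pos[of "5.2" \<beta>] b by simp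
  have R: "S \<ge> l - 3667/10000 + 72/100 * (16486/10000) + 72/100 * A"
    using ll lnln2_ge[unfolded p10] ln52_ge[unfolded p10] unfolding S_def S5 p10 by argo
  show "S \<ge> 0" using R A l by linarith
  have s: "sqrt 2 \<ge> 141421/100000" using sqrt2_ge[unfolded p10] by simp
  have c: "- ln (0.318::real) \<le> 11458/10000" using lnc0_le[unfolded p10] by simp
  have p1: "sqrt 2 * A \<ge> 141421/100000 * A" using s A by (intro mult_right_mono) auto
  have p2: "sqrt 2 * l \<ge> 141421/100000 * l" using s l by (intro mult_right_mono) auto
  have p3: "sqrt 2 * S \<ge> sqrt 2 * (l - 3667/10000 + 72/100 * (16486/10000) + 72/100 * A)" using R by simp
  have "(2 * sqrt 2 + 3) * L \<le> (2 * sqrt 2 + 3) * (A + 11458/10000 + 14/10 * l)"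
    unfolding L using c by (intro mult_left_mono) auto
  also have "\<dots> \<le> 2 * sqrt 2 * (289/100 * (l - 3667/10000 + 72/100 * (16486/10000) + 72/100 * A))"
  proof -
    have e1: "(2 * sqrt 2 + 3) * (A + 11458/10000 + 14/10 * l) = 2 * (sqrt 2 * A) + 3 * A + (2*11458/10000) * sqrt 2 + 3*11458/10000 + 28/10 * (sqrt 2 * l) + 42/10 * l"
      by (simp add: algebra_simps)
    have e2: "2 * sqrt 2 * (289/100 * (l - 3667/10000 + 72/100 * (16486/10000) + 72/100 * A)) = 578/100 * (sqrt 2 * l) + (578/100 * (-3667/10000 + 72/100*(16486/10000))) * sqrt 2 + (578/100*72/100) * (sqrt 2 * A)"
      by (simp add: algebra_simps)
    show ?thesis unfolding e1 e2 using p1 p2 s A l by argo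
  qed
  also have "\<dots> \<le> 2 * sqrt 2 * (289/100 * S)" using p3 by simp
  finally show "(2 * sqrt 2 + 3) * L \<le> 2 * sqrt 2 * (289/100 * S)" .
  have "ln (0.318::real) < 0" by simp
  then show "L > 0" unfolding L using A l by linarith
qed

lemma lineD:
  fixes L u n C :: real
  assumes L: "L > 0" and u: "u > 0" and un: "u \<le> n" "n \<le> 2 * u" and C: "C \<ge> 0"
    and key: "(2 * sqrt 2 + 3) * L \<le> 2 * sqrt 2 * C^2"
  defines "lam \<equiv> sqrt (8 * L / (u * sqrt 2))"
  shows "L / lam + lam * n / 8 \<le> C / 2 * sqrt n"
proof -
  define s where "s = sqrt (2::real)"
  have s: "s > 0" "s^2 = 2" by (auto simp: s_def)
  have lp: "lam > 0" unfolding lam_def using L u by simp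
  have l2: "lam^2 = 8 * L / (u * s)" unfolding lam_def s_def using L u by simp
  have Ll: "L / lam = lam * u * s / 8"
    using lp l2 u s by (simp add: field_simps power2_eq_square)
  have E: "L / lam + lam * n / 8 = lam * (u * s + n) / 8" using Ll by (simp add: algebra_simps)
  have n0: "n > 0" using u un by linarith
  have nonneg: "lam * (u * s + n) / 8 \<ge> 0" using lp u s n0 by simp
  have Leq: "L = lam^2 * u * s / 8" using l2 u s by (simp add: field_simps)
  have sq: "(lam * (u * s + n) / 8)^2 = L * (u * s + n)^2 / (8 * u * s)"
    unfolding Leq using u s by (simp add: power_mult_distrib power_divide field_simps power2_eq_square)
  have q: "(u * s + n)^2 \<le> (2 * s + 3) * u * n"
  proof -
    have e1: "(u * s + n)^2 = u^2 * s^2 + 2 * (s * u * n) + n^2" by (simp add: power2_eq_square algebra_simps)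
    have e2: "u^2 * s^2 = 2 * u^2" using s(2) by simp
    have e3: "(n - u) * (n - 2 * u) \<le> 0" using un by (intro mult_nonneg_nonpos) auto
    have e4: "(n - u) * (n - 2 * u) = n^2 - 3 * (u * n) + 2 * u^2" by (simp add: algebra_simps power2_eq_square)
    have e5: "(2 * s + 3) * u * n = 2 * (s * u * n) + 3 * (u * n)" by (simp add: algebra_simps)
    show ?thesis unfolding e1 e2 e5 using e3 e4 by linarith
  qed
  have "L * (u * s + n)^2 \<le> L * ((2 * s + 3) * u * n)" using q L by (intro mult_left_mono) auto
  also have "\<dots> = ((2 * s + 3) * L) * (u * n)" by simp
  also have "\<dots> \<le> (2 * s * C^2) * (u * n)" using key u n0 unfolding s_def by (intro mult_right_mono) auto
  finally have "L * (u * s + n)^2 / (8 * u * s) \<le> (2 * s * C^2) * (u * n) / (8 * u * s)"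
    using u s by (intro divide_right_mono) auto
  also have "\<dots> = C^2 * n / 4" using u s by (simp add: field_simps)
  finally have "(lam * (u * s + n) / 8)^2 \<le> C^2 * n / 4" using sq by simp
  hence "lam * (u * s + n) / 8 \<le> sqrt (C^2 * n / 4)" by (rule real_le_rsqrt)
  also have "sqrt (C^2 * n / 4) = C / 2 * sqrt n" using C n0
    by (simp add: real_sqrt_mult real_sqrt_divide)
  finally have X: "lam * (u * s + n) / 8 \<le> C / 2 * sqrt n" unfolding s_def .
  show ?thesis using E X by linarith
qed

fun hit :: "(nat \<Rightarrow> bool \<Rightarrow> real) \<Rightarrow> nat \<Rightarrow> real \<Rightarrow> real \<Rightarrow> bool list \<Rightarrow> bool" where
  "hit f a m b [] = (b \<le> m)"
| "hit f a m b (v # vs) = (b \<le> m \<or> hit f (Suc a) (m * f a v) b vs)"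

fun Wt :: "(nat \<Rightarrow> bool \<Rightarrow> real) \<Rightarrow> nat \<Rightarrow> bool list \<Rightarrow> real" where
  "Wt w a [] = 1"
| "Wt w a (v # vs) = w a v * Wt w (Suc a) vs"

lemma finite_bool_lists: "finite {ys :: bool list. length ys = n}"
  using finite_lists_length_eq[of "UNIV :: bool set" n] by simp

lemma sum_lists_Suc:
  "(\<Sum>ys\<in>{ys::bool list. length ys = Suc n}. g ys) =
     (\<Sum>ys\<in>{ys. length ys = n}. g (True # ys)) + (\<Sum>ys\<in>{ys. length ys = n}. g (False # ys))"
proof -
  let ?L = "{ys::bool list. length ys = n}"
  have eq: "{ys::bool list. length ys = Suc n} = (\<lambda>ys. True # ys) ` ?L \<union> (\<lambda>ys. False # ys) ` ?L"
  proof (rule set_eqI, rule iffI)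
    fix ys :: "bool list" assume "ys \<in> {ys. length ys = Suc n}"
    then obtain v vs where "ys = v # vs" "length vs = n" by (auto simp: length_Suc_conv)
    then show "ys \<in> (\<lambda>ys. True # ys) ` ?L \<union> (\<lambda>ys. False # ys) ` ?L" by (cases v) auto
  qed auto
  have "(\<Sum>ys\<in>{ys::bool list. length ys = Suc n}. g ys) =
      (\<Sum>ys\<in>(\<lambda>ys. True # ys) ` ?L. g ys) + (\<Sum>ys\<in>(\<lambda>ys. False # ys) ` ?L. g ys)"
    unfolding eq by (rule sum.union_disjoint) (auto simp: finite_bool_lists)
  also have "\<dots> = (\<Sum>ys\<in>?L. g (True # ys)) + (\<Sum>ys\<in>?L. g (False # ys))"
    by (subst (1 2) sum.reindex) (auto simp: inj_on_def)
  finally show ?thesis .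
qed

lemma Wt_sum: "(\<And>i. i \<ge> a \<Longrightarrow> w i True + w i False = 1) \<Longrightarrow>
  (\<Sum>ys\<in>{ys::bool list. length ys = n}. Wt w a ys) = 1"
proof (induction n arbitrary: a)
  case 0
  have "{ys::bool list. length ys = 0} = {[]}" by auto
  then show ?case by simp
next
  case (Suc n)
  have h: "(\<Sum>ys\<in>{ys::bool list. length ys = n}. Wt w (Suc a) ys) = 1"
    using Suc.prems by (intro Suc.IH) auto
  show ?case unfolding sum_lists_Suc
    by (simp add: sum_distrib_left[symmetric] h Suc.prems)
qed

lemma Wt_nonneg: "(\<And>i v. i \<ge> a \<Longrightarrow> w i v \<ge> 0) \<Longrightarrow> Wt w a ys \<ge> 0"
proof (induction ys arbitrary: a)
  case Nil then show ?case by simp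
next
  case (Cons v vs)
  have "Wt w (Suc a) vs \<ge> 0" using Cons.prems by (intro Cons.IH) auto
  then show ?case using Cons.prems by simp
qed

lemma ville:
  assumes w: "\<And>i v. i \<ge> a \<Longrightarrow> w i v \<ge> 0"
    and w1: "\<And>i. i \<ge> a \<Longrightarrow> w i True + w i False = 1"
    and f: "\<And>i v. i \<ge> a \<Longrightarrow> f i v \<ge> 0"
    and wf: "\<And>i. i \<ge> a \<Longrightarrow> w i True * f i True + w i False * f i False \<le> 1"
    and b: "b > 0" and m: "m \<ge> 0"
  shows "(\<Sum>ys\<in>{ys::bool list. length ys = n}. if hit f a m b ys then Wt w a ys else 0) \<le> m / b"
  using w w1 f wf m
proof (induction n arbitrary: a m)
  case 0
  have e: "{ys::bool list. length ys = 0} = {[]}" by auto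
  show ?case unfolding e using b 0 by (auto simp: field_simps)
next
  case (Suc n)
  show ?case
  proof (cases "b \<le> m")
    case True
    have "(\<Sum>ys\<in>{ys::bool list. length ys = Suc n}. if hit f a m b ys then Wt w a ys else 0)
        = (\<Sum>ys\<in>{ys::bool list. length ys = Suc n}. Wt w a ys)"
      by (intro sum.cong refl) (auto simp: True length_Suc_conv)
    also have "\<dots> = 1" using Suc.prems by (intro Wt_sum) auto
    also have "1 \<le> m / b" using True b by simp
    finally show ?thesis .
  next
    case False
    have IH: "(\<Sum>ys\<in>{ys::bool list. length ys = n}. if hit f (Suc a) m' b ys then Wt w (Suc a) ys else 0) \<le> m' / b"
      if "m' \<ge> 0" for m'
      using Suc.prems that by (intro Suc.IH) auto
    have fa: "f a True \<ge> 0" "f a False \<ge> 0" "w a True \<ge> 0" "w a False \<ge> 0" using Suc.prems by auto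
    have sp: "(\<Sum>ys\<in>{ys::bool list. length ys = n}. if hit f a m b (v # ys) then Wt w a (v # ys) else 0)
       = w a v * (\<Sum>ys\<in>{ys::bool list. length ys = n}. if hit f (Suc a) (m * f a v) b ys then Wt w (Suc a) ys else 0)" for v
    proof -
      have "(\<Sum>ys\<in>{ys::bool list. length ys = n}. if hit f a m b (v # ys) then Wt w a (v # ys) else 0)
         = (\<Sum>ys\<in>{ys::bool list. length ys = n}. w a v * (if hit f (Suc a) (m * f a v) b ys then Wt w (Suc a) ys else 0))"
        by (rule sum.cong) (use False in auto)
      also have "\<dots> = w a v * (\<Sum>ys\<in>{ys::bool list. length ys = n}. if hit f (Suc a) (m * f a v) b ys then Wt w (Suc a) ys else 0)"
        by (rule sum_distrib_left[symmetric])
      finally show ?thesis .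
    qed
    have "(\<Sum>ys\<in>{ys::bool list. length ys = Suc n}. if hit f a m b ys then Wt w a ys else 0)
       = w a True * (\<Sum>ys\<in>{ys::bool list. length ys = n}. if hit f (Suc a) (m * f a True) b ys then Wt w (Suc a) ys else 0)
       + w a False * (\<Sum>ys\<in>{ys::bool list. length ys = n}. if hit f (Suc a) (m * f a False) b ys then Wt w (Suc a) ys else 0)"
      unfolding sum_lists_Suc sp by simp
    also have "\<dots> \<le> w a True * ((m * f a True) / b) + w a False * ((m * f a False) / b)"
      using fa Suc.prems(5) by (intro add_mono mult_left_mono IH) auto
    also have "\<dots> = m * (w a True * f a True + w a False * f a False) / b" by (simp add: algebra_simps add_divide_distrib)
    also have "\<dots> \<le> m * 1 / b" using Suc.prems b by (intro divide_right_mono mult_left_mono) auto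
    finally show ?thesis by simp
  qed
qed

lemma hit_intro:
  "k \<le> length ys \<Longrightarrow> b \<le> m * (\<Prod>i<k. f (a+i) (ys!i)) \<Longrightarrow> hit f a m b ys"
proof (induction ys arbitrary: a m k)
  case Nil then show ?case by simp
next
  case (Cons v vs)
  show ?case
  proof (cases k)
    case 0 then show ?thesis using Cons.prems by simp
  next
    case (Suc k')
    have "(\<Prod>i<k. f (a+i) ((v#vs)!i)) = f a v * (\<Prod>i<k'. f (Suc a + i) (vs!i))"
      unfolding Suc prod.lessThan_Suc_shift by simp
    then have "hit f (Suc a) (m * f a v) b vs"
      using Cons.prems Suc by (intro Cons.IH[of k']) (auto simp: mult.assoc)
    then show ?thesis by simp
  qed
qed

lemma Wt_prod: "Wt w a ys = (\<Prod>i<length ys. w (a+i) (ys!i))"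
  by (induction ys arbitrary: a) (simp_all add: prod.lessThan_Suc_shift del: prod.lessThan_Suc)

lemma hoeff_step:
  fixes p l :: real
  assumes p: "0 \<le> p" "p \<le> 1" and l: "0 \<le> l"
  shows "p * exp (l * (p - 1) - l^2/8) + (1 - p) * exp (l * p - l^2/8) \<le> 1"
proof -
  define q where "q = 1 - p"
  have q: "q \<ge> 0" using p by (simp add: q_def)
  define X where "X = 1 + q * (exp l - 1)"
  have "exp l \<ge> 1" using l by simp
  hence "q * (exp l - 1) \<ge> 0" using q by simp
  hence X: "X > 0" unfolding X_def by simp
  have H: "-l * q + ln X \<le> l^2/8" unfolding X_def
    using Hoeffdings_lemma_aux[of l q] l q by simp
  hence "ln X \<le> l^2/8 + l * q" by simp
  hence X2: "X \<le> exp (l^2/8 + l * q)" using X by (metis exp_le_cancel_iff exp_ln)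
  have "p * exp (l * (p - 1) - l^2/8) + (1 - p) * exp (l * p - l^2/8)
      = exp (l * (p - 1) - l^2/8) * (p + q * exp l)"
  proof -
    have "exp (l * p - l^2/8) = exp (l * (p - 1) - l^2/8) * exp l"
      by (simp add: exp_add[symmetric] algebra_simps)
    thus ?thesis by (simp add: q_def algebra_simps)
  qed
  also have "p + q * exp l = X" by (simp add: X_def q_def algebra_simps)
  also have "exp (l * (p - 1) - l^2/8) * X \<le> exp (l * (p - 1) - l^2/8) * exp (l^2/8 + l * q)"
    using X2 by (intro mult_left_mono) auto
  also have "\<dots> = 1" by (simp add: exp_add[symmetric] q_def algebra_simps)
  finally show ?thesis .
qed

definition aa :: "real \<Rightarrow> nat \<Rightarrow> real" where
  "aa \<beta> j = \<beta> * 0.318 / (real j + 1) powr 1.4"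
definition LL :: "real \<Rightarrow> nat \<Rightarrow> real" where
  "LL \<beta> j = - ln (aa \<beta> j)"
definition lam :: "real \<Rightarrow> nat \<Rightarrow> real" where
  "lam \<beta> j = sqrt (8 * LL \<beta> j / (2^j * sqrt 2))"
definition fac :: "real \<Rightarrow> (nat \<Rightarrow> real) \<Rightarrow> real \<Rightarrow> nat \<Rightarrow> nat \<Rightarrow> bool \<Rightarrow> real" where
  "fac \<beta> r p j i v = exp (lam \<beta> j * r i * (p - of_bool v) - (lam \<beta> j)^2 * r i / 8)"
definition TT :: "(nat \<Rightarrow> real) \<Rightarrow> real \<Rightarrow> nat \<Rightarrow> bool list \<Rightarrow> real" where
  "TT r p k ys = (\<Sum>i\<in>{1..k}. r i * (of_bool (ys ! (i - 1)) - p))"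

lemma aa_sum: "0 < \<beta> \<Longrightarrow> (\<Sum>j<n. aa \<beta> j) \<le> \<beta>"
proof -
  assume b: "0 < \<beta>"
  have "(\<Sum>j<n. aa \<beta> j) = \<beta> * 0.318 * (\<Sum>j<n. 1 / (real j + 1) powr 1.4)"
    by (simp add: aa_def sum_distrib_left)
  also have "(\<Sum>j<n. 1 / (real j + 1) powr 1.4) = (\<Sum>j<n. (real j + 1) powr (-1.4))"
    by (intro sum.cong refl) (simp add: powr_minus_divide)
  also have "\<beta> * 0.318 * \<dots> \<le> \<beta> * 0.318 * 3.14"
    using zsum[of n] b by (intro mult_left_mono) auto
  also have "\<dots> \<le> \<beta>" using b by simp
  finally show ?thesis .
qed

lemma aa_pos: "0 < \<beta> \<Longrightarrow> aa \<beta> j > 0" by (simp add: aa_def)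

lemma fail_hit:
  fixes r :: "nat \<Rightarrow> real" and p \<beta> :: real and ys :: "bool list" and k :: nat
  assumes r: "\<And>i. r i \<in> {0, 1}" and b: "0 < \<beta>" "\<beta> < 1"
    and k: "1 \<le> k" "k \<le> length ys"
    and fl: "TT r p k ys < - (C_const k \<beta> / 2) * sqrt (N1 r k)"
  shows "\<exists>j\<le>length ys. hit (fac \<beta> r p j) 1 1 (1 / aa \<beta> j) ys"
proof -
  define n where "n = card {i\<in>{1..k}. r i = 1}"
  have N: "N1 r k = real n"
  proof -
    have "N1 r k = (\<Sum>i\<in>{1..k}. if r i = 1 then 1 else 0)"
      unfolding N1_def by (intro sum.cong refl) (use r in force)
    also have "\<dots> = (\<Sum>i\<in>{i\<in>{1..k}. r i = 1}. 1)" by (rule sum.inter_filter[symmetric]) simp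
    also have "\<dots> = real n" by (simp add: n_def)
    finally show ?thesis .
  qed
  have nk: "n \<le> k"
  proof -
    have "n \<le> card {1..k}" unfolding n_def by (rule card_mono) auto
    thus ?thesis by simp
  qed
  have sumr: "(\<Sum>i<k. r (Suc i)) = real n"
    using N unfolding N1_def using sum.atLeast1_atMost_eq[of r k] by simp
  have TTe: "TT r p k ys = (\<Sum>i<k. r (Suc i) * (of_bool (ys ! i) - p))"
    unfolding TT_def using sum.atLeast1_atMost_eq[of "\<lambda>i. r i * (of_bool (ys ! (i - 1)) - p)" k] by simp
  show ?thesis
  proof (cases "n = 0")
    case True
    have "{i\<in>{1..k}. r i = 1} = {}" using True unfolding n_def by simp
    hence "\<And>i. i \<in> {1..k} \<Longrightarrow> r i = 0" using r by blast
    hence "TT r p k ys = 0" unfolding TT_def by simp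
    moreover have "N1 r k = 0" using N True by simp
    ultimately show ?thesis using fl by simp
  next
    case False
    then obtain j where j: "2^j \<le> n" "n < 2^(j+1)" using ex_power_ivl1[of 2 n] by auto
    have "j < 2^j" by (rule less_exp)
    hence jK: "j \<le> length ys" using j nk k by linarith
    have jk: "2^j \<le> k" using j nk by linarith
    define L where "L = LL \<beta> j"
    define S where "S = ln (ln (2 * real k)) + 0.72 * ln (5.2 / \<beta>)"
    have cD: "S \<ge> 0" "(2 * sqrt 2 + 3) * L \<le> 2 * sqrt 2 * (289/100 * S)" "L > 0"
      using constD[OF jk b] unfolding L_def S_def LL_def aa_def by auto
    define C where "C = C_const k \<beta>"
    have C: "C = 1.7 * sqrt S" unfolding C_def S_def C_const_def by simp
    have C0: "C \<ge> 0" unfolding C using cD(1) by simp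
    have C2: "C^2 = 289/100 * S" unfolding C using cD(1) by (simp add: power_mult_distrib power_divide)
    have u: "(0::real) < 2^j" by simp
    have un1: "(2::real)^j \<le> real n"
    proof -
      have "real (2^j) \<le> real n" using j(1) by (simp only: of_nat_le_iff)
      thus ?thesis by simp
    qed
    have un2: "real n \<le> 2 * 2^j"
    proof -
      have "n \<le> 2*2^j" using j(2) by simp
      hence "real n \<le> real (2*2^j)" by (simp only: of_nat_le_iff)
      thus ?thesis by simp
    qed
    note un = un1 un2
    have lD: "L / lam \<beta> j + lam \<beta> j * real n / 8 \<le> C / 2 * sqrt (real n)"
      using lineD[OF cD(3) u un C0] cD(2) unfolding C2 lam_def L_def by simp
    define l where "l = lam \<beta> j"
    have lp: "l > 0" unfolding l_def lam_def using cD(3) unfolding L_def by simp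
    have "- TT r p k ys > C / 2 * sqrt (real n)" using fl N unfolding C_def by simp
    hence "- TT r p k ys > L / l + l * real n / 8" using lD unfolding l_def by linarith
    hence "l * (- TT r p k ys) > l * (L / l + l * real n / 8)" using lp by (intro mult_strict_left_mono) auto
    hence key: "L < l * (- TT r p k ys) - l^2 * real n / 8" using lp by (simp add: algebra_simps power2_eq_square)
    have prod: "(\<Prod>i<k. fac \<beta> r p j (1+i) (ys!i)) = exp (l * (- TT r p k ys) - l^2 * real n / 8)"
    proof -
      have "(\<Prod>i<k. fac \<beta> r p j (1+i) (ys!i)) = exp (\<Sum>i<k. l * r (Suc i) * (p - of_bool (ys!i)) - l^2 * r (Suc i) / 8)"
        unfolding fac_def l_def by (simp add: exp_sum)
      also have "(\<Sum>i<k. l * r (Suc i) * (p - of_bool (ys!i)) - l^2 * r (Suc i) / 8)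
          = (\<Sum>i<k. l * (- (r (Suc i) * (of_bool (ys ! i) - p))) - (l^2/8) * r (Suc i))"
        by (intro sum.cong refl) (simp add: algebra_simps)
      also have "\<dots> = l * (- (\<Sum>i<k. r (Suc i) * (of_bool (ys ! i) - p))) - (l^2/8) * (\<Sum>i<k. r (Suc i))"
        by (simp only: sum_subtractf sum_distrib_left[symmetric] sum_negf)
      also have "\<dots> = l * (- TT r p k ys) - l^2 * real n / 8" unfolding TTe sumr by simp
      finally show ?thesis .
    qed
    have aap: "aa \<beta> j > 0" using aa_pos b by simp
    have "1 / aa \<beta> j = exp L" unfolding L_def LL_def using aap by (simp add: exp_minus inverse_eq_divide)
    also have "\<dots> \<le> exp (l * (- TT r p k ys) - l^2 * real n / 8)" using key by simp
    finally have "1 / aa \<beta> j \<le> 1 * (\<Prod>i<k. fac \<beta> r p j (1+i) (ys!i))" using prod by simp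
    hence "hit (fac \<beta> r p j) 1 1 (1 / aa \<beta> j) ys" by (intro hit_intro[OF k(2)])
    thus ?thesis using jK by blast
  qed
qed

lemma LL_pos: "0 < \<beta> \<Longrightarrow> \<beta> < 1 \<Longrightarrow> LL \<beta> j > 0"
proof -
  assume b: "0 < \<beta>" "\<beta> < 1"
  have "(real j + 1) powr 1.4 \<ge> 1" by (rule ge_one_powr_ge_zero) auto
  hence "\<beta> * 0.318 / (real j + 1) powr 1.4 \<le> \<beta> * 0.318 / 1"
    using b by (intro divide_left_mono) auto
  hence A: "aa \<beta> j \<le> \<beta> * 0.318" unfolding aa_def by simp
  have "\<beta> * 0.318 < 1" using b by simp
  hence "aa \<beta> j < 1" using A by linarith
  moreover have "aa \<beta> j > 0" using b(1) by (rule aa_pos)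
  ultimately show ?thesis unfolding LL_def by simp
qed

lemma bad_sum:
  fixes r :: "nat \<Rightarrow> real" and p \<beta> :: real and w :: "nat \<Rightarrow> bool \<Rightarrow> real"
  assumes r: "\<And>i. r i \<in> {0, 1}" and b: "0 < \<beta>" "\<beta> < 1"
    and w0: "\<And>i v. i \<ge> 1 \<Longrightarrow> w i v \<ge> 0"
    and w1: "\<And>i. i \<ge> 1 \<Longrightarrow> w i True + w i False = 1"
    and wp: "\<And>i. i \<ge> 1 \<Longrightarrow> r i = 1 \<Longrightarrow> w i True = p"
  shows "(\<Sum>ys\<in>{ys::bool list. length ys = K}.
            if (\<exists>k\<in>{1..K}. TT r p k ys < - (C_const k \<beta> / 2) * sqrt (N1 r k)) then Wt w 1 ys else 0) \<le> \<beta>"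
proof -
  let ?H = "\<lambda>j ys. if hit (fac \<beta> r p j) 1 1 (1 / aa \<beta> j) ys then Wt w 1 ys else 0"
  have Wn': "Wt w a ys \<ge> 0" if "a \<ge> 1" for a ys using w0 that by (intro Wt_nonneg) auto
  have Wn: "Wt w 1 ys \<ge> 0" "Wt w (Suc 0) ys \<ge> 0" for ys using Wn' by auto
  have pt: "(if (\<exists>k\<in>{1..K}. TT r p k ys < - (C_const k \<beta> / 2) * sqrt (N1 r k)) then Wt w 1 ys else 0)
        \<le> (\<Sum>j<Suc K. ?H j ys)" if ys: "length ys = K" for ys
  proof (cases "\<exists>k\<in>{1..K}. TT r p k ys < - (C_const k \<beta> / 2) * sqrt (N1 r k)")
    case True
    then obtain k where k: "k \<in> {1..K}" "TT r p k ys < - (C_const k \<beta> / 2) * sqrt (N1 r k)" by blast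
    obtain j where j: "j \<le> length ys" "hit (fac \<beta> r p j) 1 1 (1 / aa \<beta> j) ys"
    proof -
      have kk: "1 \<le> k" "k \<le> length ys" using k ys by auto
      show ?thesis using fail_hit[OF r b kk k(2)] that by blast
    qed
    have "Wt w 1 ys = ?H j ys" using j by simp
    also have "\<dots> \<le> (\<Sum>j<Suc K. ?H j ys)"
      by (rule member_le_sum) (use j ys Wn in auto)
    finally show ?thesis using True by simp
  next
    case False
    have "0 \<le> (\<Sum>j<Suc K. ?H j ys)" by (intro sum_nonneg) (simp add: Wn)
    then show ?thesis using False by simp
  qed
  have "(\<Sum>ys\<in>{ys::bool list. length ys = K}.
            if (\<exists>k\<in>{1..K}. TT r p k ys < - (C_const k \<beta> / 2) * sqrt (N1 r k)) then Wt w 1 ys else 0)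
      \<le> (\<Sum>ys\<in>{ys::bool list. length ys = K}. \<Sum>j<Suc K. ?H j ys)"
    by (rule sum_mono) (use pt in auto)
  also have "\<dots> = (\<Sum>j<Suc K. \<Sum>ys\<in>{ys::bool list. length ys = K}. ?H j ys)"
    by (rule sum.swap)
  also have "\<dots> \<le> (\<Sum>j<Suc K. aa \<beta> j)"
  proof (rule sum_mono)
    fix j assume "j \<in> {..<Suc K}"
    have ap: "aa \<beta> j > 0" using b(1) by (rule aa_pos)
    have lp: "lam \<beta> j \<ge> 0" unfolding lam_def using LL_pos[OF b, of j] by simp
    have wf: "w i True * fac \<beta> r p j i True + w i False * fac \<beta> r p j i False \<le> 1" if i: "i \<ge> 1" for i
    proof (cases "r i = 1")
      case True
      have pw: "w i True = p" using wp i True by simp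
      have pp: "0 \<le> p" "p \<le> 1" using w0[OF i, of True] w0[OF i, of False] w1[OF i] pw by auto
      have wF: "w i False = 1 - p" using w1[OF i] pw by simp
      have e1: "fac \<beta> r p j i True = exp (lam \<beta> j * (p - 1) - (lam \<beta> j)^2/8)"
        unfolding fac_def using True by simp
      have e2: "fac \<beta> r p j i False = exp (lam \<beta> j * p - (lam \<beta> j)^2/8)"
        unfolding fac_def using True by simp
      show ?thesis unfolding e1 e2 pw wF by (rule hoeff_step[OF pp lp])
    next
      case False
      hence "r i = 0" using r[of i] by auto
      then show ?thesis using w1[OF i] by (simp add: fac_def)
    qed
    have "(\<Sum>ys\<in>{ys::bool list. length ys = K}. ?H j ys) \<le> 1 / (1 / aa \<beta> j)"
    proof (rule ville)
      show "\<And>i v. 1 \<le> i \<Longrightarrow> 0 \<le> fac \<beta> r p j i v" by (simp add: fac_def)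
      show "0 < 1 / aa \<beta> j" using ap by simp
    qed (use w0 w1 wf in auto)
    then show "(\<Sum>ys\<in>{ys::bool list. length ys = K}. ?H j ys) \<le> aa \<beta> j" by simp
  qed
  also have "\<dots> \<le> \<beta>" by (rule aa_sum[OF b(1)])
  finally show ?thesis .
qed

theorem lemma6:
  fixes M :: "'a measure" and Z :: "nat \<Rightarrow> 'a \<Rightarrow> real"
    and r :: "nat \<Rightarrow> real" and \<mu> c \<beta> :: real
  assumes "prob_space M"
    and "prob_space.indep_vars M (\<lambda>_. borel) Z {1..}"
    and "\<And>i. i \<ge> 1 \<Longrightarrow> distributed M lborel (Z i) (normal_density (\<mu> * r i) 1)"
    and "\<mu> > 0"
    and "\<And>i. r i \<in> {0, 1}"
    and "0 < \<beta>" and "\<beta> < 1"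
  shows "measure M {\<omega> \<in> space M. \<forall>k\<ge>1.
            (\<Sum>i\<in>{i\<in>{1..k}. \<bar>Z i \<omega>\<bar> > c}. r i) - tail_prob \<mu> c * N1 r k
              \<ge> - (C_const k \<beta> / 2) * sqrt (N1 r k)} \<ge> 1 - \<beta>"
proof -
  interpret P: prob_space M by (rule assms(1))
  note r = assms(5) and b = assms(6,7)
  define p where "p = tail_prob \<mu> c"
  define Y where "Y i \<omega> = (c < \<bar>Z i \<omega>\<bar>)" for i \<omega>
  define B where "B v = {x::real. (c < \<bar>x\<bar>) = v}" for v
  define w where "w i v = P.prob {\<omega>\<in>space M. Y i \<omega> = v}" for i v
  have Bs: "B v \<in> sets borel" for v unfolding B_def by measurable
  have Zm: "Z i \<in> borel_measurable M" if "i \<ge> 1" for i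
    using distributed_measurable[OF assms(3)[OF that]] by simp
  have YB: "{\<omega>\<in>space M. Y i \<omega> = v} = Z i -` B v \<inter> space M" for i v
    by (auto simp: Y_def B_def)
  have Ys: "{\<omega>\<in>space M. Y i \<omega> = v} \<in> sets M" if "i \<ge> 1" for i v
    unfolding YB using Zm[OF that] Bs by (rule measurable_sets)
  have w0: "w i v \<ge> 0" for i v unfolding w_def by simp
  have w1: "w i True + w i False = 1" if "i \<ge> 1" for i
  proof -
    have e: "{\<omega>\<in>space M. Y i \<omega> = False} = space M - {\<omega>\<in>space M. Y i \<omega> = True}" by auto
    have "w i False = P.prob (space M - {\<omega>\<in>space M. Y i \<omega> = True})" unfolding w_def e ..
    also have "\<dots> = 1 - w i True" unfolding w_def by (rule P.prob_compl[OF Ys[OF that, of True]])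
    finally have "w i False = 1 - w i True" .
    thus ?thesis by simp
  qed
  have wp: "w i True = p" if "i \<ge> 1" "r i = 1" for i
  proof -
    have "w i True = measure (distr M lborel (Z i)) (B True)"
      unfolding w_def YB using Zm[OF that(1)] Bs by (subst measure_distr) auto
    also have "distr M lborel (Z i) = normal_measure \<mu>"
      using distributed_distr_eq_density[OF assms(3)[OF that(1)]] that(2) by (simp add: normal_measure_def)
    also have "B True = {x. \<bar>x\<bar> > c}" by (auto simp: B_def)
    finally show ?thesis by (simp add: p_def tail_prob_def)
  qed
  define ev where "ev ys = {\<omega>\<in>space M. \<forall>i<length ys. Y (Suc i) \<omega> = ys ! i}" for ys
  have evs: "ev ys \<in> sets M" for ys
  proof (cases "ys = []")
    case True then show ?thesis by (simp add: ev_def)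
  next
    case False
    have "ev ys = space M \<inter> (\<Inter>i\<in>{..<length ys}. {\<omega>\<in>space M. Y (Suc i) \<omega> = ys ! i})"
      by (auto simp: ev_def)
    also have "\<dots> \<in> sets M" using False Ys by (intro sets.Int sets.top sets.finite_INT) auto
    finally show ?thesis .
  qed
  have evp: "P.prob (ev ys) = Wt w 1 ys" for ys
  proof (cases "ys = []")
    case True then show ?thesis by (simp add: ev_def P.prob_space)
  next
    case False
    define K where "K = length ys"
    have K: "K \<ge> 1" using False by (simp add: K_def Suc_le_eq)
    define A where "A i = {\<omega>\<in>space M. Y i \<omega> = ys ! (i - 1)}" for i
    have "ev ys = (\<Inter>i\<in>{1..K}. A i)"
    proof (rule set_eqI)
      fix \<omega>
      have eq: "(\<forall>i<K. Y (Suc i) \<omega> = ys ! i) \<longleftrightarrow> (\<forall>i\<in>{1..K}. Y i \<omega> = ys ! (i - 1))"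
      proof
        assume H: "\<forall>i<K. Y (Suc i) \<omega> = ys ! i"
        show "\<forall>i\<in>{1..K}. Y i \<omega> = ys ! (i - 1)"
        proof
          fix i assume i: "i \<in> {1..K}"
          hence "i - 1 < K" "Suc (i - 1) = i" by auto
          thus "Y i \<omega> = ys ! (i - 1)" using H by metis
        qed
      next
        assume H: "\<forall>i\<in>{1..K}. Y i \<omega> = ys ! (i - 1)"
        show "\<forall>i<K. Y (Suc i) \<omega> = ys ! i"
        proof (intro allI impI)
          fix i assume "i < K"
          hence "Suc i \<in> {1..K}" by auto
          from H[rule_format, OF this] show "Y (Suc i) \<omega> = ys ! i" by simp
        qed
      qed
      have "\<omega> \<in> ev ys \<longleftrightarrow> \<omega> \<in> space M \<and> (\<forall>i\<in>{1..K}. Y i \<omega> = ys ! (i - 1))"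
        unfolding ev_def K_def[symmetric] eq[symmetric] by simp
      also have "\<dots> \<longleftrightarrow> \<omega> \<in> (\<Inter>i\<in>{1..K}. A i)" using K unfolding A_def by auto
      finally show "\<omega> \<in> ev ys \<longleftrightarrow> \<omega> \<in> (\<Inter>i\<in>{1..K}. A i)" .
    qed
    also have "P.prob (\<Inter>i\<in>{1..K}. A i) = (\<Prod>i\<in>{1..K}. P.prob (A i))"
    proof (rule P.indep_setsD)
      show "P.indep_sets (\<lambda>i. {Z i -` A \<inter> space M |A. A \<in> sets borel}) {1..}"
        using assms(2) unfolding P.indep_vars_def2 by simp
      show "\<forall>j\<in>{1..K}. A j \<in> {Z j -` A \<inter> space M |A. A \<in> sets borel}"
        unfolding A_def YB using Bs by blast
    qed (use K in auto)
    also have "\<dots> = (\<Prod>i\<in>{1..K}. w i (ys ! (i - 1)))" unfolding A_def w_def ..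
    also have "\<dots> = (\<Prod>i<K. w (Suc i) (ys ! i))"
      using prod.atLeast1_atMost_eq[of "\<lambda>i. w i (ys ! (i - 1))" K] by simp
    also have "\<dots> = Wt w 1 ys" unfolding Wt_prod K_def by simp
    finally show ?thesis .
  qed
  define cond where "cond k \<omega> \<longleftrightarrow> (\<Sum>i\<in>{i\<in>{1..k}. \<bar>Z i \<omega>\<bar> > c}. r i) - tail_prob \<mu> c * N1 r k
              \<ge> - (C_const k \<beta> / 2) * sqrt (N1 r k)" for k \<omega>
  define bad where "bad K ys \<longleftrightarrow> (\<exists>k\<in>{1..K}. TT r p k ys < - (C_const k \<beta> / 2) * sqrt (N1 r k))" for K ys
  define ysw where "ysw K \<omega> = map (\<lambda>i. Y (Suc i) \<omega>) [0..<K]" for K \<omega>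
  define E where "E K = {\<omega>\<in>space M. \<exists>k\<in>{1..K}. \<not> cond k \<omega>}" for K
  have ysw_nth: "ysw K \<omega> ! i = Y (Suc i) \<omega>" if "i < K" for K \<omega> i
    using that by (simp add: ysw_def)
  have condTT: "cond k \<omega> \<longleftrightarrow> \<not> TT r p k (ysw K \<omega>) < - (C_const k \<beta> / 2) * sqrt (N1 r k)"
    if kK: "k \<le> K" for k K \<omega>
  proof -
    have s1: "(\<Sum>i\<in>{i\<in>{1..k}. \<bar>Z i \<omega>\<bar> > c}. r i) = (\<Sum>i\<in>{1..k}. if Y i \<omega> then r i else 0)"
      unfolding Y_def by (rule sum.inter_filter) simp
    have "TT r p k (ysw K \<omega>) = (\<Sum>i\<in>{1..k}. r i * (of_bool (Y i \<omega>) - p))"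
      unfolding TT_def
    proof (rule sum.cong[OF refl])
      fix i assume i: "i \<in> {1..k}"
      hence i1: "i - 1 < K" and i2: "Suc (i - 1) = i" using kK by auto
      have "ysw K \<omega> ! (i - 1) = Y i \<omega>" using ysw_nth[OF i1, of \<omega>] unfolding i2 .
      thus "r i * (of_bool (ysw K \<omega> ! (i - 1)) - p) = r i * (of_bool (Y i \<omega>) - p)" by simp
    qed
    also have "\<dots> = (\<Sum>i\<in>{1..k}. (if Y i \<omega> then r i else 0) - p * r i)"
      by (intro sum.cong refl) (simp add: algebra_simps)
    also have "\<dots> = (\<Sum>i\<in>{1..k}. if Y i \<omega> then r i else 0) - p * N1 r k"
      unfolding N1_def by (simp add: sum_subtractf sum_distrib_left)
    finally have "TT r p k (ysw K \<omega>) = (\<Sum>i\<in>{i\<in>{1..k}. \<bar>Z i \<omega>\<bar> > c}. r i) - tail_prob \<mu> c * N1 r k"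
      unfolding s1 p_def .
    thus ?thesis unfolding cond_def by linarith
  qed
  define S where "S K = {ys::bool list. length ys = K \<and> bad K ys}" for K
  have EU: "E K = (\<Union>ys\<in>S K. ev ys)" for K
  proof (rule set_eqI, rule iffI)
    fix \<omega> assume "\<omega> \<in> E K"
    then obtain k where k: "\<omega> \<in> space M" "k \<in> {1..K}" "\<not> cond k \<omega>" unfolding E_def by auto
    have "bad K (ysw K \<omega>)" unfolding bad_def using k condTT[of k K \<omega>] by auto
    hence "ysw K \<omega> \<in> S K" unfolding S_def by (simp add: ysw_def)
    moreover have "\<omega> \<in> ev (ysw K \<omega>)" unfolding ev_def using k(1) by (simp add: ysw_def)
    ultimately show "\<omega> \<in> (\<Union>ys\<in>S K. ev ys)" by blast
  next
    fix \<omega> assume "\<omega> \<in> (\<Union>ys\<in>S K. ev ys)"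
    then obtain ys where ys: "length ys = K" "bad K ys" "\<omega> \<in> ev ys" unfolding S_def by auto
    have sp: "\<omega> \<in> space M" using ys(3) unfolding ev_def by auto
    have "ysw K \<omega> = ys"
    proof (rule nth_equalityI)
      show "length (ysw K \<omega>) = length ys" using ys(1) by (simp add: ysw_def)
      fix i assume "i < length (ysw K \<omega>)"
      hence i: "i < K" by (simp add: ysw_def)
      thus "ysw K \<omega> ! i = ys ! i" using ys(1,3) ysw_nth[OF i] unfolding ev_def by auto
    qed
    then obtain k where k: "k \<in> {1..K}" "\<not> cond k \<omega>" using ys(2) condTT unfolding bad_def by fastforce
    thus "\<omega> \<in> E K" unfolding E_def using sp by auto
  qed
  have finS: "finite (S K)" for K
    by (rule finite_subset[OF _ finite_bool_lists[of K]]) (auto simp: S_def)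
  have Es: "E K \<in> sets M" for K unfolding EU using finS evs by (intro sets.finite_UN) auto
  have EP: "P.prob (E K) \<le> \<beta>" for K
  proof -
    have "P.prob (E K) = (\<Sum>ys\<in>S K. P.prob (ev ys))" unfolding EU
    proof (rule measure_finite_Union[OF finS])
      show "ev ` S K \<subseteq> sets M" using evs by auto
      show "disjoint_family_on ev (S K)"
        unfolding disjoint_family_on_def
      proof (intro ballI impI)
        fix ys ys' assume "ys \<in> S K" "ys' \<in> S K" "ys \<noteq> ys'"
        hence l: "length ys = K" "length ys' = K" "ys \<noteq> ys'" unfolding S_def by auto
        show "ev ys \<inter> ev ys' = {}"
        proof (rule ccontr)
          assume "ev ys \<inter> ev ys' \<noteq> {}"
          then obtain \<omega> where "\<omega> \<in> ev ys" "\<omega> \<in> ev ys'" by blast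
          hence "ys = ys'" using l by (intro nth_equalityI) (auto simp: ev_def)
          thus False using l by simp
        qed
      qed
    qed (simp add: P.emeasure_finite)
    also have "\<dots> = (\<Sum>ys\<in>S K. Wt w 1 ys)" by (simp add: evp)
    also have "\<dots> = (\<Sum>ys\<in>{ys::bool list. length ys = K}. if bad K ys then Wt w 1 ys else 0)"
    proof -
      have "S K = {ys \<in> {ys::bool list. length ys = K}. bad K ys}" by (auto simp: S_def)
      hence "(\<Sum>ys\<in>S K. Wt w 1 ys) = (\<Sum>ys\<in>{ys \<in> {ys::bool list. length ys = K}. bad K ys}. Wt w 1 ys)" by simp
      also have "\<dots> = (\<Sum>ys\<in>{ys::bool list. length ys = K}. if bad K ys then Wt w 1 ys else 0)"
        by (rule sum.inter_filter[OF finite_bool_lists])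
      finally show ?thesis .
    qed
    also have "\<dots> \<le> \<beta>" unfolding bad_def
      by (rule bad_sum[OF r b]) (use w0 w1 wp in auto)
    finally show ?thesis .
  qed
  have inc: "incseq E" unfolding incseq_def E_def by auto
  have lim: "(\<lambda>K. P.prob (E K)) \<longlonglongrightarrow> P.prob (\<Union>K. E K)"
    using Es inc by (intro P.finite_Lim_measure_incseq) auto
  have UP: "P.prob (\<Union>K. E K) \<le> \<beta>" using lim EP by (intro LIMSEQ_le_const2) auto
  have Us: "(\<Union>K. E K) \<in> sets M" using Es by auto
  have G: "{\<omega> \<in> space M. \<forall>k\<ge>1. cond k \<omega>} = space M - (\<Union>K. E K)"
  proof (rule set_eqI, rule iffI)
    fix \<omega> assume "\<omega> \<in> {\<omega> \<in> space M. \<forall>k\<ge>1. cond k \<omega>}"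
    thus "\<omega> \<in> space M - (\<Union>K. E K)" unfolding E_def by auto
  next
    fix \<omega> assume H: "\<omega> \<in> space M - (\<Union>K. E K)"
    have "cond k \<omega>" if "k \<ge> 1" for k
    proof -
      have "\<omega> \<notin> E k" using H by auto
      thus ?thesis using H that unfolding E_def by auto
    qed
    thus "\<omega> \<in> {\<omega> \<in> space M. \<forall>k\<ge>1. cond k \<omega>}" using H by auto
  qed
  have "P.prob {\<omega> \<in> space M. \<forall>k\<ge>1. cond k \<omega>} = 1 - P.prob (\<Union>K. E K)"
    unfolding G by (rule P.prob_compl[OF Us])
  hence "P.prob {\<omega> \<in> space M. \<forall>k\<ge>1. cond k \<omega>} \<ge> 1 - \<beta>" using UP by linarith
  thus ?thesis unfolding cond_def .
qed

end
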